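(* Let $c>0$, let $d\ge 1$, and let $\eta=\mathrm{diag}(-1,+1,\dots,+1)$ be the Minkowski metric on $\mathbb{R}^{d+1}$ (indices lowered with $\eta$). Let $t\mapsto \vec{x}(t)\in\mathbb{R}^d$ be a smooth trajectory with $|\vec v|<c$, where $\vec v=\mathrm{d}\vec x/\mathrm{d}t$, $\vec a=\mathrm{d}\vec v/\mathrm{d}t$, and $\gamma=(1-\vec v^{\,2}/c^2)^{-1/2}$. Let $\tau$ be proper time, $\mathrm{d}t/\mathrm{d}\tau=\gamma$, let $x^\mu(\tau)=(ct,\vec x)$ be the worldline, $v^\mu=\mathrm{d}x^\mu/\mathrm{d}\tau=(\gamma c,\gamma\vec v)$ and $a^\mu=\mathrm{d}v^\mu/\mathrm{d}\tau$. Define $(d+1)$-vectors recursively by $P_{(1)}^\mu=a^\mu$ and $$P_{(n)}^\mu=\Big(\delta^\mu_{\ \nu}+\frac{v^\mu v_\nu}{c^2}\Big)\frac{\mathrm{d}}{\mathrm{d}\tau}P_{(n-1)}^\nu,\qquad n\ge 2.$$ Let $\hat M$ be the $d\times d$ matrix $\hat M_{ij}=\delta_{ij}+\frac{\gamma^2}{c^2}v_iv_j$. Define $d$-vectors $\vec Q_{(n)}$ by $\vec Q_{(1)}=\vec a$ and $$\vec Q_{(n)}=\frac{1}{\gamma^n}\frac{\mathrm{d}}{\mathrm{d}t}\big(\gamma^n\vec Q_{(n-1)}\big)+\frac{\gamma^2}{c^2}\big(\vec v\cdot\vec Q_{(n-1)}\big)\vec a,\qquad n\ge 2.$$ Then for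 every $n\ge 1$, $$P_{(n)}^\mu=\Big(\frac{\gamma^{n+3}}{c}\,\vec v\cdot\vec Q_{(n)},\ \gamma^{n+1}\hat M\vec Q_{(n)}\Big),$$ where the first entry is the time component and the second the spatial components.
   Context: Dots denote Euclidean inner products in $\mathbb{R}^d$. $\hat M$ is invertible with inverse $\hat M^{-1}_{ij}=\delta_{ij}-v_iv_j/c^2$. *)

theory Defs
  imports "HOL-Analysis.Analysis"
begin

text \<open>Spatial vectors live in real^'d (d = CARD('d) \<ge> 1); spacetime (d+1)-vectors are
pairs (time component, spatial components) :: (real \<times> (real^'d)).\<close>

definition smooth_traj :: "(real \<Rightarrow> 'a::real_normed_vector) \<Rightarrow> bool" where
  "smooth_traj f \<longleftrightarrow> (\<exists>D. D 0 = f \<and> (\<forall>k t. (D k has_vector_derivative D (Suc k) t) (at t)))"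

definition gam :: "real \<Rightarrow> real^'d \<Rightarrow> real" where
  "gam c v = 1 / sqrt (1 - (v \<bullet> v) / c\<^sup>2)"

definition vel :: "(real \<Rightarrow> real^'d) \<Rightarrow> real \<Rightarrow> real^'d" where
  "vel x t = vector_derivative x (at t)"

definition acc :: "(real \<Rightarrow> real^'d) \<Rightarrow> real \<Rightarrow> real^'d" where
  "acc x t = vector_derivative (vel x) (at t)"

definition mink :: "(real \<times> (real^'d)) \<Rightarrow> (real \<times> (real^'d)) \<Rightarrow> real" where
  "mink u w = - fst u * fst w + snd u \<bullet> snd w"

definition proj :: "real \<Rightarrow> (real \<times> (real^'d)) \<Rightarrow> (real \<times> (real^'d)) \<Rightarrow> (real \<times> (real^'d))" where
  "proj c u w = w + (mink u w / c\<^sup>2) *\<^sub>R u"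

definition worldline :: "real \<Rightarrow> (real \<Rightarrow> real) \<Rightarrow> (real \<Rightarrow> real^'d) \<Rightarrow> real \<Rightarrow> (real \<times> (real^'d))" where
  "worldline c tt x s = (c * tt s, x (tt s))"

definition fvel :: "real \<Rightarrow> (real \<Rightarrow> real) \<Rightarrow> (real \<Rightarrow> real^'d) \<Rightarrow> real \<Rightarrow> (real \<times> (real^'d))" where
  "fvel c tt x s = vector_derivative (worldline c tt x) (at s)"

definition facc :: "real \<Rightarrow> (real \<Rightarrow> real) \<Rightarrow> (real \<Rightarrow> real^'d) \<Rightarrow> real \<Rightarrow> (real \<times> (real^'d))" where
  "facc c tt x s = vector_derivative (fvel c tt x) (at s)"

text \<open>P_(n) as functions of proper time; the index 0 is an unused dummy.\<close>
fun P :: "real \<Rightarrow> (real \<Rightarrow> real) \<Rightarrow> (real \<Rightarrow> real^'d) \<Rightarrow> nat \<Rightarrow> real \<Rightarrow> (real \<times> (real^'d))" where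
  "P c tt x 0 s = 0"
| "P c tt x (Suc 0) s = facc c tt x s"
| "P c tt x (Suc (Suc k)) s =
     proj c (fvel c tt x s) (vector_derivative (P c tt x (Suc k)) (at s))"

text \<open>Q_(n) as functions of coordinate time t; the index 0 is an unused dummy.\<close>
fun Q :: "real \<Rightarrow> (real \<Rightarrow> real^'d) \<Rightarrow> nat \<Rightarrow> real \<Rightarrow> real^'d" where
  "Q c x 0 t = 0"
| "Q c x (Suc 0) t = acc x t"
| "Q c x (Suc (Suc k)) t =
     (1 / gam c (vel x t) ^ Suc (Suc k)) *\<^sub>R
        vector_derivative (\<lambda>s. gam c (vel x s) ^ Suc (Suc k) *\<^sub>R Q c x (Suc k) s) (at t)
     + ((gam c (vel x t))\<^sup>2 / c\<^sup>2 * (vel x t \<bullet> Q c x (Suc k) t)) *\<^sub>R acc x t"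

definition Mhat :: "real \<Rightarrow> real^'d \<Rightarrow> real^'d^'d" where
  "Mhat c v = (\<chi> i j. (if i = j then 1 else 0) + (gam c v)\<^sup>2 / c\<^sup>2 * v $ i * v $ j)"

end

theory Submission
  imports Defs
begin


fun Ck :: "nat \<Rightarrow> (real \<Rightarrow> 'a::real_normed_vector) \<Rightarrow> bool" where
  "Ck 0 f = True"
| "Ck (Suc k) f = ((\<forall>t. f differentiable (at t)) \<and> Ck k (\<lambda>t. vector_derivative f (at t)))"

lemma vd_eq: "(\<And>t. (f has_vector_derivative f' t) (at t)) \<Longrightarrow> (\<lambda>t. vector_derivative f (at t)) = f'"
  by (rule ext) (simp add: vector_derivative_at)

lemma Ck_intro:
  assumes "\<And>t. (f has_vector_derivative f' t) (at t)" "Ck k f'"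
  shows "Ck (Suc k) f"
proof -
  have "(\<lambda>t. vector_derivative f (at t)) = f'" using assms(1) by (rule vd_eq)
  then show ?thesis using assms by (auto intro: differentiableI_vector)
qed

lemma Ck_deriv: assumes "Ck (Suc k) f"
  shows "(f has_vector_derivative vector_derivative f (at t)) (at t)"
  using assms by (simp add: vector_derivative_works)

lemma Ck_mono: "Ck (Suc k) f \<Longrightarrow> Ck k f"
proof (induction k arbitrary: f)
  case 0 then show ?case by simp
next
  case (Suc k)
  then show ?case by auto
qed

lemma Ck_const: "Ck k (\<lambda>t. c)"
proof (induction k arbitrary: c)
  case (Suc k) then show ?case
    by (intro Ck_intro[where f'="\<lambda>t. 0"]) auto
qed simp

lemma Ck_add: "Ck k f \<Longrightarrow> Ck k g \<Longrightarrow> Ck k (\<lambda>t. f t + g t)"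
proof (induction k arbitrary: f g)
  case (Suc k)
  show ?case
    apply (rule Ck_intro[where f'="\<lambda>t. vector_derivative f (at t) + vector_derivative g (at t)"])
    using Suc by (auto intro!: has_vector_derivative_add Ck_deriv)
qed simp

lemma (in bounded_bilinear) Ck_bil: "Ck k f \<Longrightarrow> Ck k g \<Longrightarrow> Ck k (\<lambda>t. prod (f t) (g t))"
proof (induction k arbitrary: f g)
  case (Suc k)
  show ?case
    apply (rule Ck_intro[where f'="\<lambda>t. prod (f t) (vector_derivative g (at t)) + prod (vector_derivative f (at t)) (g t)"])
     apply (rule has_vector_derivative)
    using Suc apply (auto intro!: Ck_deriv)[2]
    apply (rule Ck_add)
     apply (rule Suc.IH)
    using Suc Ck_mono apply auto[2]
     apply (rule Suc.IH)
    using Suc Ck_mono apply auto[2]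
    done
qed simp

lemmas Ck_scaleR = bounded_bilinear.Ck_bil[OF bounded_bilinear_scaleR]
lemmas Ck_mult = bounded_bilinear.Ck_bil[OF bounded_bilinear_mult]
lemmas Ck_inner = bounded_bilinear.Ck_bil[OF bounded_bilinear_inner]

lemma Ck_power: "Ck k f \<Longrightarrow> Ck k (\<lambda>t. (f t::real) ^ m)"
  by (induction m) (auto intro: Ck_mult Ck_const)



lemma Mhat_mult: "Mhat c v *v q = q + ((gam c v)\<^sup>2 / c\<^sup>2 * (v \<bullet> q)) *\<^sub>R v"
proof -
  have "(Mhat c v *v q) $ i = (q + ((gam c v)\<^sup>2 / c\<^sup>2 * (v \<bullet> q)) *\<^sub>R v) $ i" for i
  proof -
    have "(Mhat c v *v q) $ i = (\<Sum>j\<in>UNIV. ((if i = j then 1 else 0) + (gam c v)\<^sup>2 / c\<^sup>2 * v $ i * v $ j) * q $ j)"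
      by (simp add: Mhat_def matrix_vector_mult_def)
    also have "\<dots> = (\<Sum>j\<in>UNIV. (if i = j then q $ j else 0)) + (gam c v)\<^sup>2 / c\<^sup>2 * v $ i * (\<Sum>j\<in>UNIV. v $ j * q $ j)"
    proof -
      have "\<And>j. ((if i = j then 1 else 0) + (gam c v)\<^sup>2 / c\<^sup>2 * v $ i * v $ j) * q $ j
            = (if i = j then q $ j else 0) + (gam c v)\<^sup>2 / c\<^sup>2 * v $ i * (v $ j * q $ j)" by (auto simp: algebra_simps)
      then show ?thesis by (simp add: sum.distrib sum_distrib_left)
    qed
    also have "\<dots> = (q + ((gam c v)\<^sup>2 / c\<^sup>2 * (v \<bullet> q)) *\<^sub>R v) $ i"
      by (simp add: inner_vec_def)
    finally show ?thesis .
  qed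
  then show ?thesis by (simp add: vec_eq_iff)
qed

lemma alg_step:
  fixes v a Y' q :: "real^'d" and G c f' K :: real
  assumes c: "c > 0" and G: "G > 0" and rel: "v \<bullet> v = c\<^sup>2 - c\<^sup>2 / G\<^sup>2" and K: "K > 0"
  defines "Q2 \<equiv> (1 / K) *\<^sub>R Y' + (G\<^sup>2 / c\<^sup>2 * (v \<bullet> q)) *\<^sub>R a"
  defines "Y2 \<equiv> (G * K) *\<^sub>R Q2"
  defines "f2 \<equiv> G\<^sup>2 * (v \<bullet> Y2)"
  shows "proj c (c * G, G *\<^sub>R v) (G *\<^sub>R (f' / c, Y' + ((G\<^sup>2 * (v \<bullet> (K *\<^sub>R q)) / c\<^sup>2) *\<^sub>R a + (f' / c\<^sup>2) *\<^sub>R v)))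
       = (f2 / c, Y2 + (f2 / c\<^sup>2) *\<^sub>R v)"
  (is "?L = ?R")
proof (simp only: prod_eq_iff, intro conjI)
  show "fst ?L = fst ?R"
    using c G K unfolding proj_def mink_def f2_def Y2_def Q2_def
    by (simp add: inner_add_right rel field_simps power2_eq_square)
  show "snd ?L = snd ?R"
    using c G K unfolding proj_def mink_def f2_def Y2_def Q2_def
    by (simp add: vec_eq_iff inner_add_right rel field_simps power2_eq_square)
qed



definition Yf :: "real \<Rightarrow> (real \<Rightarrow> real^'d) \<Rightarrow> nat \<Rightarrow> real \<Rightarrow> real^'d" where
  "Yf c x n t = gam c (vel x t) ^ Suc n *\<^sub>R Q c x n t"
definition ff :: "real \<Rightarrow> (real \<Rightarrow> real^'d) \<Rightarrow> nat \<Rightarrow> real \<Rightarrow> real" where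
  "ff c x n t = (gam c (vel x t))\<^sup>2 * (vel x t \<bullet> Yf c x n t)"
definition FF :: "real \<Rightarrow> (real \<Rightarrow> real^'d) \<Rightarrow> nat \<Rightarrow> real \<Rightarrow> real \<times> (real^'d)" where
  "FF c x n t = (ff c x n t / c, Yf c x n t + (ff c x n t / c\<^sup>2) *\<^sub>R vel x t)"

lemma Yf_fun: "Yf c x n = (\<lambda>t. gam c (vel x t) ^ Suc n *\<^sub>R Q c x n t)"
  by (simp add: fun_eq_iff Yf_def)
lemma ff_fun: "ff c x n = (\<lambda>t. (gam c (vel x t))\<^sup>2 * (vel x t \<bullet> (gam c (vel x t) ^ Suc n *\<^sub>R Q c x n t)))"
  by (simp add: fun_eq_iff ff_def Yf_def)

lemma Ck_div_const: "Ck k f \<Longrightarrow> Ck k (\<lambda>t. (f t::real) / d)"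
proof -
  assume "Ck k f"
  then have "Ck k (\<lambda>t. f t * (1/d))" by (rule Ck_mult[OF _ Ck_const])
  then show ?thesis by simp
qed

lemma Ck_inv_pow: "Ck k (\<lambda>t. 1 / f t) \<Longrightarrow> Ck k (\<lambda>t. 1 / (f t::real) ^ m)"
  using Ck_power[of k "\<lambda>t. 1 / f t" m] by (simp add: power_one_over)

context
  fixes c :: real and x :: "real \<Rightarrow> real^'d" and tt :: "real \<Rightarrow> real"
  assumes c: "c > 0"
    and sm: "smooth_traj x"
    and vlt: "\<forall>t. norm (vel x t) < c"
    and ttd: "\<forall>s. (tt has_real_derivative gam c (vel x (tt s))) (at s)"
begin

lemma traj_facts:
  "(\<forall>t. (x has_vector_derivative vel x t) (at t)) \<and> (\<forall>t. (vel x has_vector_derivative acc x t) (at t))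
   \<and> (\<forall>k. Ck k (vel x)) \<and> (\<forall>k. Ck k (acc x))"
proof -
  obtain D where D0: "D 0 = x" and DD: "\<And>k t. (D k has_vector_derivative D (Suc k) t) (at t)"
    using sm unfolding smooth_traj_def by blast
  have CD: "Ck k (D j)" for k j
  proof (induction k arbitrary: j)
    case (Suc k) then show ?case by (intro Ck_intro[OF DD]) 
  qed simp
  have v: "vel x = D 1" unfolding vel_def using DD[of 0] D0 by (simp add: vd_eq)
  have a: "acc x = D 2" unfolding acc_def v using DD[of 1] by (simp add: vd_eq numeral_2_eq_2)
  show ?thesis using DD[of 0] DD[of 1] D0 CD by (simp add: v a numeral_2_eq_2)
qed

lemma xd: "(x has_vector_derivative vel x t) (at t)" using traj_facts by blast
lemma vd: "(vel x has_vector_derivative acc x t) (at t)" using traj_facts by blast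
lemma Cv: "Ck k (vel x)" using traj_facts by blast
lemma Ca: "Ck k (acc x)" using traj_facts by blast

lemma gam_facts:
  "gam c (vel x t) > 0 \<and> vel x t \<bullet> vel x t = c\<^sup>2 - c\<^sup>2 / (gam c (vel x t))\<^sup>2
   \<and> 1 - vel x t \<bullet> vel x t / c\<^sup>2 > 0 \<and> gam c (vel x t) = 1 / sqrt (1 - vel x t \<bullet> vel x t / c\<^sup>2)"
proof -
  let ?v = "vel x t"
  have "norm ?v < c" using vlt by blast
  then have "?v \<bullet> ?v < c\<^sup>2" using c
    by (metis norm_ge_zero power2_norm_eq_inner power_strict_mono zero_less_numeral)
  then have u: "1 - ?v \<bullet> ?v / c\<^sup>2 > 0" using c by (simp add: field_simps)
  then have g2: "(gam c ?v)\<^sup>2 = 1 / (1 - ?v \<bullet> ?v / c\<^sup>2)" unfolding gam_def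
    by (simp add: power_divide)
  have "?v \<bullet> ?v = c\<^sup>2 - c\<^sup>2 / (gam c ?v)\<^sup>2" unfolding g2 using c by (simp add: field_simps)
  then show ?thesis using u unfolding gam_def by simp
qed

lemma gd: "((\<lambda>t. gam c (vel x t)) has_real_derivative
            gam c (vel x t) ^ 3 * (vel x t \<bullet> acc x t) / c\<^sup>2) (at t)"
proof -
  let ?v = "vel x t" and ?a = "acc x t"
  have ivv: "((\<lambda>t. vel x t \<bullet> vel x t) has_real_derivative 2 * (?v \<bullet> ?a)) (at t)"
    unfolding has_real_derivative_iff_has_vector_derivative
    using bounded_bilinear.has_vector_derivative[OF bounded_bilinear_inner vd vd]
    by (simp add: inner_commute)
  have u: "1 - ?v \<bullet> ?v / c\<^sup>2 > 0" using gam_facts by blast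
  define U where "U = (\<lambda>t. 1 - vel x t \<bullet> vel x t / c\<^sup>2)"
  have Up: "U t > 0" using u by (simp add: U_def)
  have hU: "(U has_real_derivative - (2 * (?v \<bullet> ?a) / c\<^sup>2)) (at t)"
    unfolding U_def by (intro DERIV_diff[where D=0, simplified] DERIV_cdivide ivv DERIV_const)
  have hs: "((\<lambda>t. sqrt (U t)) has_real_derivative inverse (sqrt (U t)) / 2 * - (2 * (?v \<bullet> ?a) / c\<^sup>2)) (at t)"
    using u unfolding U_def[symmetric] by (intro DERIV_chain2[OF DERIV_real_sqrt hU]) (simp add: U_def)
  have hi: "((\<lambda>t. inverse (sqrt (U t))) has_real_derivative
      - ((inverse (sqrt (U t)) / 2 * - (2 * (?v \<bullet> ?a) / c\<^sup>2)) * inverse (sqrt (U t) ^ Suc (Suc 0)))) (at t)"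
    using Up by (intro DERIV_inverse_fun hs) simp
  have e: "- ((inverse (sqrt (U t)) / 2 * - (2 * (?v \<bullet> ?a) / c\<^sup>2)) * inverse (sqrt (U t) ^ Suc (Suc 0)))
     = gam c ?v ^ 3 * (?v \<bullet> ?a) / c\<^sup>2"
  proof -
    have g: "gam c ?v = 1 / sqrt (U t)" unfolding gam_def U_def ..
    have sp: "sqrt (U t) > 0" using Up by simp
    show ?thesis unfolding g using sp c by (simp add: field_simps power3_eq_cube power2_eq_square)
  qed
  have gf: "(\<lambda>s. gam c (vel x s)) = (\<lambda>t. inverse (sqrt (U t)))"
    unfolding gam_def U_def by (simp add: divide_inverse)
  show ?thesis unfolding gf using hi unfolding e .
qed

lemma Cg: "Ck k (\<lambda>t. gam c (vel x t))"
proof (induction k)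
  case (Suc k)
  show ?case
    apply (rule Ck_intro[where f'="\<lambda>t. gam c (vel x t) ^ 3 * (vel x t \<bullet> acc x t) / c\<^sup>2"])
    using gd has_real_derivative_iff_has_vector_derivative apply blast
    by (intro Ck_div_const Ck_mult Ck_power Suc Ck_inner Cv Ca)
qed simp

lemma Cinvg: "Ck k (\<lambda>t. 1 / gam c (vel x t))"
proof (induction k)
  case (Suc k)
  have d: "((\<lambda>t. 1 / gam c (vel x t)) has_real_derivative - (1 / gam c (vel x t)) * (vel x t \<bullet> acc x t) / c\<^sup>2 * (gam c (vel x t))\<^sup>2) (at t)" for t
  proof -
    have gp: "gam c (vel x t) > 0" using gam_facts by blast
    have d1: "((\<lambda>t. inverse (gam c (vel x t))) has_real_derivative
       - (gam c (vel x t) ^ 3 * (vel x t \<bullet> acc x t) / c\<^sup>2 * inverse (gam c (vel x t) ^ Suc (Suc 0)))) (at t)"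
      using gp by (intro DERIV_inverse_fun gd) simp
    moreover have eq: "- (gam c (vel x t) ^ 3 * (vel x t \<bullet> acc x t) / c\<^sup>2 * inverse (gam c (vel x t) ^ Suc (Suc 0)))
      = - (1 / gam c (vel x t)) * (vel x t \<bullet> acc x t) / c\<^sup>2 * (gam c (vel x t))\<^sup>2"
      using gp by (simp add: field_simps power3_eq_cube power2_eq_square)
    have fe: "(\<lambda>t. 1 / gam c (vel x t)) = (\<lambda>t. inverse (gam c (vel x t)))"
      by (simp add: divide_inverse)
    show ?thesis unfolding fe using d1 unfolding eq .
  qed
  show ?case
    apply (rule Ck_intro[where f'="\<lambda>t. - (1 / gam c (vel x t)) * (vel x t \<bullet> acc x t) / c\<^sup>2 * (gam c (vel x t))\<^sup>2"])
    using d has_real_derivative_iff_has_vector_derivative apply blast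
    using Ck_mult[OF Ck_div_const[OF Ck_mult[OF Ck_mult[OF Ck_const Suc] Ck_inner[OF Cv Ca]]] Ck_power[OF Cg], of "-1" "c\<^sup>2" 2]
    by simp
qed simp

lemma CQ: "Ck k (Q c x (Suc m))"
proof (induction m arbitrary: k)
  case 0 then show ?case using Ca by simp
next
  case (Suc m)
  have e: "Q c x (Suc (Suc m)) = (\<lambda>t. (1 / gam c (vel x t) ^ Suc (Suc m)) *\<^sub>R
        vector_derivative (\<lambda>s. gam c (vel x s) ^ Suc (Suc m) *\<^sub>R Q c x (Suc m) s) (at t)
     + ((gam c (vel x t))\<^sup>2 / c\<^sup>2 * (vel x t \<bullet> Q c x (Suc m) t)) *\<^sub>R acc x t)"
    by (simp add: fun_eq_iff)
  have Y: "Ck (Suc k) (\<lambda>s. gam c (vel x s) ^ Suc (Suc m) *\<^sub>R Q c x (Suc m) s)"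
    by (intro Ck_scaleR Ck_power Cg Suc)
  show ?case unfolding e
    apply (rule Ck_add)
     apply (rule Ck_scaleR)
      apply (rule Ck_inv_pow, rule Cinvg)
    using Y apply simp
    by (intro Ck_scaleR Ck_mult Ck_div_const Ck_power Cg Ck_inner Cv Suc Ca)
qed

lemma chain_tt:
  assumes "\<And>t. (H has_vector_derivative H' t) (at t)"
  shows "((\<lambda>s. H (tt s)) has_vector_derivative gam c (vel x (tt s)) *\<^sub>R H' (tt s)) (at s)"
proof -
  have "(tt has_vector_derivative gam c (vel x (tt s))) (at s)"
    using ttd has_real_derivative_iff_has_vector_derivative by blast
  from vector_diff_chain_at[OF this assms] show ?thesis by (simp add: o_def)
qed

lemma chain_tt_vd:
  assumes "\<And>t. (H has_vector_derivative H' t) (at t)"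
  shows "vector_derivative (\<lambda>s. H (tt s)) (at s) = gam c (vel x (tt s)) *\<^sub>R H' (tt s)"
  using chain_tt[OF assms] by (simp add: vector_derivative_at)

lemma fvel_eq: "fvel c tt x s = (c * gam c (vel x (tt s)), gam c (vel x (tt s)) *\<^sub>R vel x (tt s))"
proof -
  have w: "worldline c tt x = (\<lambda>s. (c * tt s, x (tt s)))" by (simp add: fun_eq_iff worldline_def)
  have "((\<lambda>s. c * tt s) has_vector_derivative c * gam c (vel x (tt s))) (at s)"
    using DERIV_cmult[OF ttd[rule_format], of c] has_real_derivative_iff_has_vector_derivative by blast
  moreover have "((\<lambda>s. x (tt s)) has_vector_derivative gam c (vel x (tt s)) *\<^sub>R vel x (tt s)) (at s)"
    by (rule chain_tt[OF xd])
  ultimately show ?thesis unfolding fvel_def w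
    by (intro vector_derivative_at has_vector_derivative_Pair)
qed

lemma P1: "P c tt x (Suc 0) s = FF c x (Suc 0) (tt s)"
proof -
  define V where "V = (\<lambda>t. (c * gam c (vel x t), gam c (vel x t) *\<^sub>R vel x t))"
  define g' where "g' = (\<lambda>t. gam c (vel x t) ^ 3 * (vel x t \<bullet> acc x t) / c\<^sup>2)"
  have fv: "fvel c tt x = (\<lambda>s. V (tt s))" by (simp add: fun_eq_iff fvel_eq V_def)
  have dV: "(V has_vector_derivative (c * g' t, gam c (vel x t) *\<^sub>R acc x t + g' t *\<^sub>R vel x t)) (at t)" for t
    unfolding V_def g'_def
    apply (intro has_vector_derivative_Pair has_vector_derivative_scaleR vd gd)
    using DERIV_cmult[OF gd, of c] has_real_derivative_iff_has_vector_derivative by blast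
  have "P c tt x (Suc 0) s = gam c (vel x (tt s)) *\<^sub>R (c * g' (tt s), gam c (vel x (tt s)) *\<^sub>R acc x (tt s) + g' (tt s) *\<^sub>R vel x (tt s))"
    by (simp add: facc_def fv chain_tt_vd[OF dV])
  also have "\<dots> = FF c x (Suc 0) (tt s)"
    using c unfolding FF_def ff_def Yf_def g'_def
    by (simp add: vec_eq_iff inner_add_right field_simps power2_eq_square power3_eq_cube)
  finally show ?thesis .
qed

lemma dFF:
  "(FF c x (Suc m) has_vector_derivative
     (vector_derivative (ff c x (Suc m)) (at t) / c,
      vector_derivative (Yf c x (Suc m)) (at t) + ((ff c x (Suc m) t / c\<^sup>2) *\<^sub>R acc x t
        + (vector_derivative (ff c x (Suc m)) (at t) / c\<^sup>2) *\<^sub>R vel x t))) (at t)"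
proof -
  have CY: "Ck (Suc 0) (Yf c x (Suc m))" unfolding Yf_fun
    by (intro Ck_scaleR Ck_power Cg CQ)
  have Cf: "Ck (Suc 0) (ff c x (Suc m))" unfolding ff_fun
    by (intro Ck_mult Ck_power Cg Ck_inner Cv Ck_scaleR CQ)
  have df: "(ff c x (Suc m) has_real_derivative vector_derivative (ff c x (Suc m)) (at t)) (at t)"
    using Ck_deriv[OF Cf] has_real_derivative_iff_has_vector_derivative by blast
  have dY: "(Yf c x (Suc m) has_vector_derivative vector_derivative (Yf c x (Suc m)) (at t)) (at t)"
    by (rule Ck_deriv[OF CY])
  have "((\<lambda>t. ff c x (Suc m) t / c) has_vector_derivative vector_derivative (ff c x (Suc m)) (at t) / c) (at t)"
    using DERIV_cdivide[OF df] has_real_derivative_iff_has_vector_derivative by blast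
  moreover have "((\<lambda>t. Yf c x (Suc m) t + (ff c x (Suc m) t / c\<^sup>2) *\<^sub>R vel x t) has_vector_derivative
     vector_derivative (Yf c x (Suc m)) (at t) + ((ff c x (Suc m) t / c\<^sup>2) *\<^sub>R acc x t
        + (vector_derivative (ff c x (Suc m)) (at t) / c\<^sup>2) *\<^sub>R vel x t)) (at t)"
    by (intro has_vector_derivative_add dY has_vector_derivative_scaleR DERIV_cdivide df vd)
  ultimately show ?thesis
    unfolding FF_def[abs_def] by (rule has_vector_derivative_Pair)
qed

lemma Pstep:
  assumes IH: "P c tt x (Suc m) = (\<lambda>s. FF c x (Suc m) (tt s))"
  shows "P c tt x (Suc (Suc m)) s = FF c x (Suc (Suc m)) (tt s)"
proof -
  let ?t = "tt s"
  let ?G = "gam c (vel x ?t)"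
  have gf: "?G > 0" "vel x ?t \<bullet> vel x ?t = c\<^sup>2 - c\<^sup>2 / ?G\<^sup>2" using gam_facts by blast+
  have "P c tt x (Suc (Suc m)) s = proj c (c * ?G, ?G *\<^sub>R vel x ?t)
     (?G *\<^sub>R (vector_derivative (ff c x (Suc m)) (at ?t) / c,
      vector_derivative (Yf c x (Suc m)) (at ?t) + ((ff c x (Suc m) ?t / c\<^sup>2) *\<^sub>R acc x ?t
        + (vector_derivative (ff c x (Suc m)) (at ?t) / c\<^sup>2) *\<^sub>R vel x ?t)))"
    by (simp only: P.simps IH fvel_eq chain_tt_vd[OF dFF])
  also have "\<dots> = FF c x (Suc (Suc m)) ?t"
  proof -
    have K: "?G ^ Suc (Suc m) > 0" using gf by simp
    have ffe: "ff c x (Suc m) ?t = ?G\<^sup>2 * (vel x ?t \<bullet> (?G ^ Suc (Suc m) *\<^sub>R Q c x (Suc m) ?t))"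
      by (simp add: ff_def Yf_def)
    have Qe: "Q c x (Suc (Suc m)) ?t = (1 / ?G ^ Suc (Suc m)) *\<^sub>R vector_derivative (Yf c x (Suc m)) (at ?t)
        + (?G\<^sup>2 / c\<^sup>2 * (vel x ?t \<bullet> Q c x (Suc m) ?t)) *\<^sub>R acc x ?t"
      by (simp add: Yf_fun)
    have Pw: "?G ^ Suc (Suc (Suc m)) = ?G * ?G ^ Suc (Suc m)" by simp
    show ?thesis
      unfolding ffe
      apply (subst alg_step[OF c gf(1) gf(2) K])
      unfolding FF_def ff_def Yf_def Qe Pw ..
  qed
  finally show ?thesis .
qed

lemma Peq: "P c tt x (Suc m) = (\<lambda>s. FF c x (Suc m) (tt s))"
proof (induction m)
  case 0 then show ?case using P1 by (simp add: fun_eq_iff)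
next
  case (Suc m) then show ?case using Pstep by (simp add: fun_eq_iff)
qed

end

lemma FF_target:
  "FF c x n t = (gam c (vel x t) ^ (n + 3) / c * (vel x t \<bullet> Q c x n t),
            gam c (vel x t) ^ (n + 1) *\<^sub>R (Mhat c (vel x t) *v Q c x n t))"
  unfolding FF_def ff_def Yf_def Mhat_mult
  by (simp add: algebra_simps power_add power2_eq_square power3_eq_cube)

theorem proposition1:
  fixes c :: real and x :: "real \<Rightarrow> real^'d" and tt :: "real \<Rightarrow> real"
  assumes "c > 0"
    and "smooth_traj x"
    and "\<forall>t. norm (vel x t) < c"
    and "\<forall>s. (tt has_real_derivative gam c (vel x (tt s))) (at s)"
  shows "\<forall>n\<ge>1. \<forall>s. P c tt x n s =
           (gam c (vel x (tt s)) ^ (n + 3) / c * (vel x (tt s) \<bullet> Q c x n (tt s)),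
            gam c (vel x (tt s)) ^ (n + 1) *\<^sub>R (Mhat c (vel x (tt s)) *v Q c x n (tt s)))"
proof (intro allI impI)
  fix n :: nat and s assume "n \<ge> 1"
  then obtain m where n: "n = Suc m" by (cases n) auto
  show "P c tt x n s = (gam c (vel x (tt s)) ^ (n + 3) / c * (vel x (tt s) \<bullet> Q c x n (tt s)),
            gam c (vel x (tt s)) ^ (n + 1) *\<^sub>R (Mhat c (vel x (tt s)) *v Q c x n (tt s)))"
    unfolding n Peq[OF assms] FF_target ..
qed

end
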